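(* Fix a protocol in the totally quasi-ordered population protocol model $\mathrm{POP}^{\precsim}$, with finite state set $Q$, totally ordered color set $\mathbb{D}$, and transition function $\delta:Q^2\times\{<,=,>\}\to Q^2$. Let $\to$ be its transition relation and $\le$ the subconfiguration relation described below. Then $\le$ is a well-quasi-order on configurations and $\to$ is compatible with $\le$; that is, (configurations, $\le$, $\to$) is a well-structured transition system.
   Context: In $\mathrm{POP}^{\precsim}$, a configuration with $n$ agents is a sequence $((q_1,d_1),\dots,(q_n,d_n))\in(Q\times\mathbb{D})^n$ with $d_1\le d_2\le\dots\le d_n$ (agents sorted by color; $q_i$ is the mutable state, $d_i$ the immutable hidden color). A transition chooses an ordered pair $(i,j)$ of distinct agents (initiator $i$, responder $j$) and replaces $(q_i,q_j)$ by $\delta(q_i,q_j,r)$, where $r\in\{<,=,>\}$ is the result of comparing $d_i$ with $d_j$; all other components are unchanged. The subconfiguration relation: for configurations $s=((q_i,d_i))_{i\le m}$ and $t=((q'_i,d'_i))_{i\le m'}$, $s\le t$ iff there is a strictly increasing $f:\{1,\dots,m\}\to\{1,\dots,m'\}$ with $q_i=q'_{f(i)}$ for all $i$ and, for all $i,j$, $d_i\le d_j$ iff $d'_{f(i)}\le d'_{f(j)}$. A well-quasi-order is a reflexive transitive relation such that every infinite sequence $x_0,x_1,\dots$ has $i<j$ with $x_i\le x_j$. Compatibility means: whenever $s\to s'$ and $s\le t$, there exists $t'$ with $t\to t'$ and $s'\le t'$. *)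

theory Defs
  imports Main
begin

datatype cmp = Lt | Eq | Gt

definition compare :: "'d::linorder \<Rightarrow> 'd \<Rightarrow> cmp" where
  "compare x y = (if x < y then Lt else if x = y then Eq else Gt)"

definition is_config :: "('q \<times> 'd::linorder) list \<Rightarrow> bool" where
  "is_config c \<longleftrightarrow> sorted (map snd c)"

(* One transition of the protocol with transition function delta:
   initiator i, responder j (distinct, 0-based indices) *)
definition step ::
  "('q \<Rightarrow> 'q \<Rightarrow> cmp \<Rightarrow> 'q \<times> 'q) \<Rightarrow> ('q \<times> 'd::linorder) list \<Rightarrow> ('q \<times> 'd) list \<Rightarrow> bool" where
  "step delta c c' \<longleftrightarrow>
     (\<exists>i j. i < length c \<and> j < length c \<and> i \<noteq> j \<and>
        (let (qi, di) = c ! i; (qj, dj) = c ! j;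
             (qi', qj') = delta qi qj (compare di dj)
         in c' = c[i := (qi', di), j := (qj', dj)]))"

definition subconf :: "('q \<times> 'd::linorder) list \<Rightarrow> ('q \<times> 'd) list \<Rightarrow> bool" where
  "subconf s t \<longleftrightarrow>
     (\<exists>f::nat \<Rightarrow> nat.
        strict_mono_on {..<length s} f \<and>
        (\<forall>i<length s. f i < length t) \<and>
        (\<forall>i<length s. fst (s ! i) = fst (t ! f i)) \<and>
        (\<forall>i<length s. \<forall>j<length s.
            (snd (s ! i) \<le> snd (s ! j)) \<longleftrightarrow> (snd (t ! f i) \<le> snd (t ! f j))))"

definition wqo_on :: "('a \<Rightarrow> 'a \<Rightarrow> bool) \<Rightarrow> 'a set \<Rightarrow> bool" where
  "wqo_on le A \<longleftrightarrow>
     (\<forall>x\<in>A. le x x) \<and>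
     (\<forall>x\<in>A. \<forall>y\<in>A. \<forall>z\<in>A. le x y \<longrightarrow> le y z \<longrightarrow> le x z) \<and>
     (\<forall>X::nat \<Rightarrow> 'a. (\<forall>k. X k \<in> A) \<longrightarrow> (\<exists>i j. i < j \<and> le (X i) (X j)))"

definition compatible_on ::
  "('a \<Rightarrow> 'a \<Rightarrow> bool) \<Rightarrow> ('a \<Rightarrow> 'a \<Rightarrow> bool) \<Rightarrow> 'a set \<Rightarrow> bool" where
  "compatible_on le tr A \<longleftrightarrow>
     (\<forall>s\<in>A. \<forall>s' t. t \<in> A \<longrightarrow> tr s s' \<longrightarrow> le s t \<longrightarrow>
        (\<exists>t'. tr t t' \<and> le s' t'))"

end

theory Submission
  imports Defs "HOL-Library.Ramsey" "HOL-Library.Sublist"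
begin


definition goodseq :: "('a \<Rightarrow> 'a \<Rightarrow> bool) \<Rightarrow> (nat \<Rightarrow> 'a) \<Rightarrow> bool" where
  "goodseq P X \<longleftrightarrow> (\<exists>i j. i < j \<and> P (X i) (X j))"

lemma ramsey_seq:
  assumes g: "\<And>X. goodseq P X"
  shows "\<exists>\<phi>::nat\<Rightarrow>nat. strict_mono \<phi> \<and> (\<forall>i j. i<j \<longrightarrow> P (a (\<phi> i)) (a (\<phi> j)))"
proof -
  define f where "f S = (if P (a (Min S)) (a (Max S)) then 0 else (1::nat))" for S
  have "\<forall>x\<in>(UNIV::nat set). \<forall>y\<in>UNIV. x \<noteq> y \<longrightarrow> f {x, y} < 2" by (simp add: f_def)
  from Ramsey2[OF infinite_UNIV_nat this] obtain Y t where
    Y: "infinite Y" "t < 2" "\<forall>x\<in>Y. \<forall>y\<in>Y. x\<noteq>y \<longrightarrow> f {x, y} = t" by blast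
  define \<phi> where "\<phi> = enumerate Y"
  have sm: "strict_mono \<phi>" unfolding \<phi>_def using Y(1) by (simp add: strict_mono_def enumerate_mono)
  have inY: "\<phi> i \<in> Y" for i unfolding \<phi>_def using Y(1) by (rule enumerate_in_set)
  have ft: "f {\<phi> i, \<phi> j} = t" if "i < j" for i j
    using Y(3) inY sm that by (metis strict_mono_less less_irrefl)
  have mm: "Min {\<phi> i, \<phi> j} = \<phi> i" "Max {\<phi> i, \<phi> j} = \<phi> j" if "i < j" for i j
    using strict_monoD[OF sm that] by auto
  show ?thesis
  proof (cases "t = 0")
    case True
    have "P (a (\<phi> i)) (a (\<phi> j))" if "i<j" for i j
      using ft[OF that] mm[OF that] True by (auto simp: f_def split: if_splits)
    then show ?thesis using sm by blast
  next
    case False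
    then have "\<not> P (a (\<phi> i)) (a (\<phi> j))" if "i<j" for i j
      using ft[OF that] mm[OF that] by (auto simp: f_def split: if_splits)
    moreover have "goodseq P (a \<circ> \<phi>)" by (rule g)
    ultimately show ?thesis by (auto simp: goodseq_def)
  qed
qed

lemma higman:
  assumes g: "\<And>X. goodseq P X"
  shows "goodseq (list_emb P) X"
proof (rule ccontr)
  assume bad0: "\<not> goodseq (list_emb P) X"
  define bad where "bad Y \<longleftrightarrow> \<not> goodseq (list_emb P) Y" for Y
  define chs where "chs n Z = (SOME Y. bad Y \<and> (\<forall>i<n. Y i = Z i) \<and>
      (\<forall>W. bad W \<and> (\<forall>i<n. W i = Z i) \<longrightarrow> length (Y n) \<le> length (W n)))" for n Z
  have ch: "bad (chs n Z) \<and> (\<forall>i<n. chs n Z i = Z i) \<and>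
      (\<forall>W. bad W \<and> (\<forall>i<n. W i = Z i) \<longrightarrow> length (chs n Z n) \<le> length (W n))"
    if "bad Z" for n Z
  proof -
    define S where "S = {Y. bad Y \<and> (\<forall>i<n. Y i = Z i)}"
    have "Z \<in> S" using that by (simp add: S_def)
    then obtain Y where Y: "Y \<in> S" "\<forall>W\<in>S. length (Y n) \<le> length (W n)"
      using ex_has_least_nat[of "\<lambda>Y. Y \<in> S" Z "\<lambda>Y. length (Y n)"] by blast
    then have "\<exists>Y. bad Y \<and> (\<forall>i<n. Y i = Z i) \<and>
      (\<forall>W. bad W \<and> (\<forall>i<n. W i = Z i) \<longrightarrow> length (Y n) \<le> length (W n))"
      by (auto simp: S_def)
    then show ?thesis unfolding chs_def by (rule someI_ex)
  qed
  define mb where "mb = rec_nat (chs 0 X) (\<lambda>n Z. chs (Suc n) Z)"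
  have mb0: "mb 0 = chs 0 X" and mbS: "mb (Suc n) = chs (Suc n) (mb n)" for n
    by (simp_all add: mb_def)
  have mbbad: "bad (mb n)" for n
    by (induction n) (use ch bad0 bad_def in \<open>auto simp: mb0 mbS\<close>)
  have agree: "mb (n + k) i = mb n i" if "i \<le> n" for n k i
    using that
  proof (induction k)
    case 0 then show ?case by simp
  next
    case (Suc k)
    have "mb (n + Suc k) i = mb (n + k) i" using ch[OF mbbad[of "n+k"], of "Suc (n+k)"] Suc.prems
      by (simp add: mbS)
    then show ?case using Suc by simp
  qed
  define M where "M i = mb i i" for i
  have Mi: "M i = mb m i" if "i \<le> m" for i m
    using agree[of i i "m - i"] that by (simp add: M_def)
  have Mbad: "bad M"
  proof -
    { fix i j assume ij: "i < j" "list_emb P (M i) (M j)"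
      then have "list_emb P (mb j i) (mb j j)" using Mi[of i j] Mi[of j j] by simp
      with ij mbbad[of j] have False by (auto simp: bad_def goodseq_def) }
    then show ?thesis by (auto simp: bad_def goodseq_def)
  qed
  have Mmin: "length (M n) \<le> length (W n)" if "bad W" "\<forall>i<n. W i = M i" for n W
  proof (cases n)
    case 0
    then show ?thesis using ch[OF bad0[folded bad_def], of 0] that by (simp add: M_def mb0)
  next
    case (Suc m)
    have "\<forall>i<n. W i = mb m i" using that Mi Suc by simp
    then show ?thesis using ch[OF mbbad[of m], of n] that Suc by (simp add: M_def mbS)
  qed
  have Mne: "M i \<noteq> []" for i
  proof
    assume "M i = []"
    then have "list_emb P (M i) (M (Suc i))" by simp
    with Mbad show False by (auto simp: bad_def goodseq_def)
  qed
  define a where "a i = hd (M i)" for i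
  define T where "T i = tl (M i)" for i
  have MaT: "M i = a i # T i" for i using Mne[of i] by (simp add: a_def T_def)
  obtain \<phi> :: "nat \<Rightarrow> nat" where sm: "strict_mono \<phi>" and Pa: "\<And>i j. i<j \<Longrightarrow> P (a (\<phi> i)) (a (\<phi> j))"
    using ramsey_seq[OF g, of a] by blast
  define n where "n = \<phi> 0"
  define W where "W k = (if k < n then M k else T (\<phi> (k - n)))" for k
  have "\<not> bad W"
  proof
    assume "bad W"
    from Mmin[OF this, of n] have "length (M n) \<le> length (W n)" by (simp add: W_def)
    also have "\<dots> < length (M n)" by (simp add: W_def n_def MaT)
    finally show False by simp
  qed
  then obtain i j where ij: "i < j" "list_emb P (W i) (W j)" by (auto simp: bad_def goodseq_def)
  have phin: "n \<le> \<phi> k" for k unfolding n_def using sm by (metis le0 strict_mono_less_eq)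
  show False
  proof (cases "j < n")
    case True
    then show ?thesis using ij Mbad by (auto simp: W_def bad_def goodseq_def)
  next
    case jn: False
    show ?thesis
    proof (cases "i < n")
      case True
      then have "list_emb P (M i) (T (\<phi> (j - n)))" using ij jn by (simp add: W_def)
      then have "list_emb P (M i) (M (\<phi> (j - n)))" by (simp add: MaT list_emb_Cons)
      moreover have "i < \<phi> (j - n)" using True phin[of "j-n"] by simp
      ultimately show ?thesis using Mbad by (auto simp: bad_def goodseq_def)
    next
      case False
      then have "list_emb P (T (\<phi> (i - n))) (T (\<phi> (j - n)))" using ij jn by (simp add: W_def)
      moreover have ijn: "i - n < j - n" using False jn ij by simp
      ultimately have "list_emb P (M (\<phi> (i - n))) (M (\<phi> (j - n)))"
        using Pa[OF ijn] by (simp add: MaT list_emb_Cons2)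
      moreover have "\<phi> (i - n) < \<phi> (j - n)" using sm ijn by (simp add: strict_mono_less)
      ultimately show ?thesis using Mbad by (auto simp: bad_def goodseq_def)
    qed
  qed
qed


lemma compare_cong: "(x \<le> y \<longleftrightarrow> x' \<le> y') \<Longrightarrow> (y \<le> x \<longleftrightarrow> y' \<le> x') \<Longrightarrow> compare x y = compare (x'::'a::linorder) y'"
proof -
  assume a: "(x \<le> y \<longleftrightarrow> x' \<le> y')" "(y \<le> x \<longleftrightarrow> y' \<le> x')"
  have "x < y \<longleftrightarrow> x' < y'" using a by (simp add: less_le_not_le)
  moreover have "x = y \<longleftrightarrow> x' = y'" using a by (metis order.eq_iff)
  ultimately show ?thesis unfolding compare_def by simp
qed
lemma good_finite_aux:
  fixes Y :: "nat \<Rightarrow> 'q::finite"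
  shows "\<exists>i j. i < j \<and> Y i = Y j"
proof -
  have "\<not> inj Y"
  proof
    assume "inj Y"
    then have "infinite (range Y)" using infinite_UNIV_nat finite_imageD by blast
    then show False by simp
  qed
  then obtain i j where ij: "i \<noteq> j" "Y i = Y j" unfolding inj_def by blast
  show ?thesis
  proof (cases "i < j")
    case True then show ?thesis using ij by blast
  next
    case False then have "j < i" using ij by simp
    then show ?thesis using ij by metis
  qed
qed

lemma step_iff: "step delta c c' \<longleftrightarrow>
  (\<exists>i j. i < length c \<and> j < length c \<and> i \<noteq> j \<and>
     c' = c[i := (fst (delta (fst (c!i)) (fst (c!j)) (compare (snd (c!i)) (snd (c!j)))), snd (c!i)),
            j := (snd (delta (fst (c!i)) (fst (c!j)) (compare (snd (c!i)) (snd (c!j)))), snd (c!j))])"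
  unfolding step_def Let_def by (simp only: case_prod_beta)


definition ungroup :: "('d \<times> 'q list) list \<Rightarrow> ('q \<times> 'd) list" where
  "ungroup G = concat (map (\<lambda>(d,w). map (\<lambda>q. (q,d)) w) G)"

definition validG :: "('d::linorder \<times> 'q list) list \<Rightarrow> bool" where
  "validG G \<longleftrightarrow> sorted_wrt (<) (map fst G) \<and> (\<forall>x\<in>set G. snd x \<noteq> [])"

lemma ungroup_Nil[simp]: "ungroup [] = []" by (simp add: ungroup_def)
lemma ungroup_Cons[simp]: "ungroup ((d,w)#G) = map (\<lambda>q. (q,d)) w @ ungroup G"
  by (simp add: ungroup_def)

lemma ungroup_colours: "snd ` set (ungroup G) \<subseteq> fst ` set G"
proof (induction G)
  case (Cons x G)
  then show ?case by (cases x) auto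
qed simp

lemma grp_exists:
  fixes c :: "('q \<times> 'd::linorder) list"
  assumes "sorted (map snd c)"
  shows "\<exists>G. validG G \<and> ungroup G = c \<and> (c \<noteq> [] \<longrightarrow> G \<noteq> [] \<and> fst (hd G) = snd (hd c))"
  using assms
proof (induction c)
  case Nil
  then show ?case by (auto simp: validG_def intro: exI[of _ "[]"])
next
  case (Cons x c)
  obtain q d where x: "x = (q,d)" by force
  from Cons obtain G where G: "validG G" "ungroup G = c" "c \<noteq> [] \<longrightarrow> G \<noteq> [] \<and> fst (hd G) = snd (hd c)"
    by auto
  have dle: "\<forall>y\<in>set c. d \<le> snd y" using Cons.prems x by auto
  show ?case
  proof (cases c)
    case Nil
    then show ?thesis using x G
      by (intro exI[of _ "[(d,[q])]"]) (auto simp: validG_def)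
  next
    case (Cons y c')
    then obtain e w G' where GG: "G = (e,w)#G'" "e = snd y" using G by (cases G) auto
    have "d \<le> e" using dle Cons GG by auto
    show ?thesis
    proof (cases "d = e")
      case True
      then show ?thesis using x G GG
        by (intro exI[of _ "(e, q#w)#G'"]) (auto simp: validG_def)
    next
      case False
      with \<open>d \<le> e\<close> have "d < e" by simp
      moreover have "\<forall>z\<in>set G'. e < fst z" using G(1) GG by (auto simp: validG_def)
      ultimately have "\<forall>z\<in>set G. d < fst z" using GG by force
      then show ?thesis using x G
        by (intro exI[of _ "(d, [q])#G"]) (auto simp: validG_def)
    qed
  qed
qed

definition embfg where
  "embfg f g s t \<longleftrightarrow> strict_mono_on {..<length s} f \<and>
     (\<forall>i<length s. f i < length t \<and> fst (s!i) = fst (t!f i) \<and> snd (t!f i) = g (snd (s!i)))"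

lemma L_app: "embfg f g s t \<Longrightarrow> embfg (\<lambda>i. length u + f i) g s (u@t)"
  unfolding embfg_def strict_mono_on_def by (auto simp: nth_append_length_plus)

lemma L_cons:
  assumes "embfg f g s t" "fst a = fst b" "snd b = g (snd a)"
  shows "embfg (\<lambda>i. case i of 0 \<Rightarrow> 0 | Suc k \<Rightarrow> Suc (f k)) g (a#s) (b#t)"
  using assms unfolding embfg_def strict_mono_on_def
  apply (auto split: nat.splits)
  done

lemma L_sub:
  assumes "embfg f g s t" "strict_mono_on (snd ` set s) g"
  shows "subconf s t"
  unfolding subconf_def
proof (intro exI[of _ f] conjI allI impI)
  show "strict_mono_on {..<length s} f" using assms(1) by (simp add: embfg_def)
  fix i assume i: "i < length s"
  then show "f i < length t" "fst (s ! i) = fst (t ! f i)" using assms(1) by (auto simp: embfg_def)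
  fix j assume j: "j < length s"
  have gi: "snd (t!f i) = g (snd (s!i))" and gj: "snd (t!f j) = g (snd (s!j))"
    using assms(1) i j by (auto simp: embfg_def)
  have mi: "snd (s!i) \<in> snd ` set s" and mj: "snd (s!j) \<in> snd ` set s" using i j by auto
  show "(snd (s ! i) \<le> snd (s ! j)) = (snd (t ! f i) \<le> snd (t ! f j))"
    unfolding gi gj
    using strict_mono_onD[OF assms(2) mi mj] strict_mono_onD[OF assms(2) mj mi]
    by (cases "snd (s ! i)" "snd (s ! j)" rule: linorder_cases) auto
qed

lemma inner:
  assumes "list_emb (=) w v" "embfg f g s t" "g d = e"
  shows "\<exists>f'. embfg f' g (map (\<lambda>q. (q,d)) w @ s) (map (\<lambda>q. (q,e)) v @ t)"
  using assms(1)
proof (induction rule: list_emb.induct)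
  case (list_emb_Nil ys)
  show ?case using L_app[OF assms(2), of "map (\<lambda>q. (q,e)) ys"] by auto
next
  case (list_emb_Cons xs ys y)
  then obtain f' where "embfg f' g (map (\<lambda>q. (q,d)) xs @ s) (map (\<lambda>q. (q,e)) ys @ t)" by blast
  from L_app[OF this, of "[(y,e)]"] show ?case by auto
next
  case (list_emb_Cons2 x y xs ys)
  then obtain f' where "embfg f' g (map (\<lambda>q. (q,d)) xs @ s) (map (\<lambda>q. (q,e)) ys @ t)" by blast
  from L_cons[OF this, of "(x,d)" "(y,e)"] list_emb_Cons2(1) assms(3) show ?case by auto
qed

lemma outer:
  assumes "list_emb (\<lambda>x y. list_emb (=) (snd x) (snd y)) G H" "validG G" "validG H"
  shows "\<exists>f g. embfg f g (ungroup G) (ungroup H) \<and> strict_mono_on (fst ` set G) g \<and> g ` fst ` set G \<subseteq> fst ` set H"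
  using assms
proof (induction rule: list_emb.induct)
  case (list_emb_Nil ys)
  show ?case by (auto simp: embfg_def strict_mono_on_def)
next
  case (list_emb_Cons xs ys y)
  then have "validG ys" by (auto simp: validG_def)
  with list_emb_Cons obtain f g where fg: "embfg f g (ungroup xs) (ungroup ys)"
    "strict_mono_on (fst ` set xs) g" "g ` fst ` set xs \<subseteq> fst ` set ys" by blast
  obtain e v where y: "y = (e,v)" by force
  show ?case using L_app[OF fg(1), of "map (\<lambda>q. (q,e)) v"] fg(2,3) y
    by (intro exI) auto
next
  case (list_emb_Cons2 x y xs ys)
  obtain d w where x: "x = (d,w)" by force
  obtain e v where y: "y = (e,v)" by force
  have vx: "validG xs" and vy: "validG ys" using list_emb_Cons2.prems by (auto simp: validG_def)
  with list_emb_Cons2 obtain f g where fg: "embfg f g (ungroup xs) (ungroup ys)"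
    "strict_mono_on (fst ` set xs) g" "g ` fst ` set xs \<subseteq> fst ` set ys" by blast
  have dlt: "\<forall>z\<in>fst ` set xs. d < z" using list_emb_Cons2.prems(1) x by (auto simp: validG_def)
  have elt: "\<forall>z\<in>fst ` set ys. e < z" using list_emb_Cons2.prems(2) y by (auto simp: validG_def)
  define g' where "g' = g(d := e)"
  have "embfg f g' (ungroup xs) (ungroup ys)"
  proof -
    have "snd (ungroup xs ! i) \<noteq> d" if "i < length (ungroup xs)" for i
    proof -
      have "snd (ungroup xs ! i) \<in> fst ` set xs" using ungroup_colours[of xs] that
        by (meson image_eqI nth_mem subsetD)
      then show ?thesis using dlt by auto
    qed
    then show ?thesis using fg(1) by (auto simp: embfg_def g'_def)
  qed
  from inner[OF _ this, of w v d e] list_emb_Cons2(1) x y obtain f' where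
    f': "embfg f' g' (ungroup (x#xs)) (ungroup (y#ys))" by (auto simp: g'_def)
  have sm: "strict_mono_on (fst ` set (x#xs)) g'"
  proof (rule strict_mono_onI)
    fix a b assume ab: "a \<in> fst ` set (x#xs)" "b \<in> fst ` set (x#xs)" "a < b"
    show "g' a < g' b"
    proof (cases "a = d")
      case True
      then have "b \<noteq> d" "b \<in> fst ` set xs" using ab x by auto
      moreover have "g b \<in> fst ` set ys" using fg(3) \<open>b \<in> fst ` set xs\<close> by blast
      ultimately show ?thesis using True elt by (auto simp: g'_def)
    next
      case False
      then have axs: "a \<in> fst ` set xs" using ab x by auto
      then have "b \<noteq> d" "b \<in> fst ` set xs" using ab x dlt by auto
      then show ?thesis using strict_mono_onD[OF fg(2) axs _ ab(3)] axs dlt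
        by (auto simp: g'_def)
    qed
  qed
  have "g' ` fst ` set (x#xs) \<subseteq> fst ` set (y#ys)"
    using fg(3) dlt x y by (auto simp: g'_def)
  with f' sm show ?case by blast
qed

lemma good_finite:
  fixes Y :: "nat \<Rightarrow> 'q::finite"
  shows "goodseq (=) Y"
   using good_finite_aux[of Y] unfolding goodseq_def by blast

lemma good_pairs:
  "goodseq (\<lambda>x y. list_emb (=) (snd x) (snd y)) (Z :: nat \<Rightarrow> 'd \<times> 'q::finite list)"
proof -
  have "goodseq (list_emb (=)) (snd \<circ> Z)" by (rule higman[OF good_finite])
  then show ?thesis by (auto simp: goodseq_def)
qed

lemma subconf_refl: "subconf s s"
  unfolding subconf_def by (intro exI[of _ id]) (auto simp: strict_mono_on_def)

lemma subconf_trans: "subconf s t \<Longrightarrow> subconf t u \<Longrightarrow> subconf s u"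
  unfolding subconf_def
proof (elim exE conjE)
  fix f h
  assume f: "strict_mono_on {..<length s} f" "\<forall>i<length s. f i < length t"
    "\<forall>i<length s. fst (s ! i) = fst (t ! f i)"
    "\<forall>i<length s. \<forall>j<length s. (snd (s ! i) \<le> snd (s ! j)) = (snd (t ! f i) \<le> snd (t ! f j))"
  assume h: "strict_mono_on {..<length t} h" "\<forall>i<length t. h i < length u"
    "\<forall>i<length t. fst (t ! i) = fst (u ! h i)"
    "\<forall>i<length t. \<forall>j<length t. (snd (t ! i) \<le> snd (t ! j)) = (snd (u ! h i) \<le> snd (u ! h j))"
  show "\<exists>f. strict_mono_on {..<length s} f \<and> (\<forall>i<length s. f i < length u) \<and>
        (\<forall>i<length s. fst (s ! i) = fst (u ! f i)) \<and>
        (\<forall>i<length s. \<forall>j<length s. (snd (s ! i) \<le> snd (s ! j)) = (snd (u ! f i) \<le> snd (u ! f j)))"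
    apply (intro exI[of _ "h \<circ> f"] conjI)
    using f h unfolding strict_mono_on_def by auto
qed

theorem lemma8:
  fixes delta :: "'q::finite \<Rightarrow> 'q \<Rightarrow> cmp \<Rightarrow> 'q \<times> 'q"
  shows "wqo_on (subconf :: ('q \<times> 'd::linorder) list \<Rightarrow> _ \<Rightarrow> bool) {c. is_config c}
         \<and> compatible_on subconf (step delta) {c :: ('q \<times> 'd) list. is_config c}"
proof
  show "wqo_on (subconf :: ('q \<times> 'd::linorder) list \<Rightarrow> _ \<Rightarrow> bool) {c. is_config c}"
    unfolding wqo_on_def
  proof (intro conjI ballI allI impI)
    fix X :: "nat \<Rightarrow> ('q \<times> 'd) list"
    assume X: "\<forall>k. X k \<in> {c. is_config c}"
    have "\<forall>k. \<exists>G. validG G \<and> ungroup G = X k"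
      using X grp_exists unfolding is_config_def by blast
    then obtain GG where GG: "\<And>k. validG (GG k) \<and> ungroup (GG k) = X k" by metis
    have "goodseq (list_emb (\<lambda>x y. list_emb (=) (snd x) (snd y))) GG"
      by (rule higman[OF good_pairs])
    then obtain i j where ij: "i < j" "list_emb (\<lambda>x y. list_emb (=) (snd x) (snd y)) (GG i) (GG j)"
      by (auto simp: goodseq_def)
    from outer[OF ij(2)] GG obtain f g where fg: "embfg f g (X i) (X j)" "strict_mono_on (fst ` set (GG i)) g"
      by metis
    have "strict_mono_on (snd ` set (X i)) g"
    proof -
      have "snd ` set (X i) \<subseteq> fst ` set (GG i)" using ungroup_colours[of "GG i"] GG by metis
      then show ?thesis using fg(2) unfolding strict_mono_on_def monotone_on_def by (meson subsetD)
    qed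
    with fg(1) have "subconf (X i) (X j)" by (rule L_sub)
    then show "\<exists>i j. i < j \<and> subconf (X i) (X j)" using ij(1) by blast
  qed (auto intro: subconf_refl subconf_trans)
next
  show "compatible_on subconf (step delta) {c :: ('q \<times> 'd) list. is_config c}"
    unfolding compatible_on_def
  proof (intro ballI allI impI)
    fix s s' t :: "('q \<times> 'd) list"
    assume st: "step delta s s'" and sub: "subconf s t"
    from st obtain i j where ij: "i < length s" "j < length s" "i \<noteq> j" and
      s': "s' = s[i := (fst (delta (fst (s!i)) (fst (s!j)) (compare (snd (s!i)) (snd (s!j)))), snd (s!i)),
            j := (snd (delta (fst (s!i)) (fst (s!j)) (compare (snd (s!i)) (snd (s!j)))), snd (s!j))]"
      unfolding step_iff by blast
    from sub obtain f where f: "strict_mono_on {..<length s} f" "\<forall>i<length s. f i < length t"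
      "\<forall>i<length s. fst (s ! i) = fst (t ! f i)"
      "\<forall>i<length s. \<forall>j<length s. (snd (s ! i) \<le> snd (s ! j)) = (snd (t ! f i) \<le> snd (t ! f j))"
      unfolding subconf_def by blast
    have finj: "f a = f b \<longleftrightarrow> a = b" if "a < length s" "b < length s" for a b
      using f(1) that unfolding strict_mono_on_def by (metis lessThan_iff linorder_neq_iff less_irrefl)
    have cmp: "compare (snd (s!i)) (snd (s!j)) = compare (snd (t!f i)) (snd (t!f j))"
      using f(4) ij by (intro compare_cong) auto
    define D where "D = delta (fst (s!i)) (fst (s!j)) (compare (snd (s!i)) (snd (s!j)))"
    define t' where "t' = t[f i := (fst D, snd (t!f i)), f j := (snd D, snd (t!f j))]"
    have "step delta t t'"
      unfolding step_iff t'_def D_def cmp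
      using f(2,3) ij finj by (intro exI[of _ "f i"] exI[of _ "f j"]) auto
    moreover have "subconf s' t'"
      unfolding subconf_def
    proof (intro exI[of _ f] conjI allI impI)
      show "strict_mono_on {..<length s'} f" using f(1) s' by simp
      fix k assume k: "k < length s'"
      then have k': "k < length s" using s' by simp
      show "f k < length t'" using f(2) k' by (simp add: t'_def)
      have nth_s': "s' ! k = (if k = j then (snd D, snd (s!j)) else if k = i then (fst D, snd (s!i)) else s ! k)"
        using s' k' ij by (simp add: D_def nth_list_update)
      have nth_t': "t' ! f k = (if k = j then (snd D, snd (t!f j)) else if k = i then (fst D, snd (t!f i)) else t ! f k)"
        using k' ij f(2) finj by (auto simp: t'_def nth_list_update)
      have snds: "snd (s' ! k) = snd (s ! k)" "snd (t' ! f k) = snd (t ! f k)"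
        using nth_s' nth_t' by auto
      show "fst (s' ! k) = fst (t' ! f k)" using nth_s' nth_t' f(3) k' by auto
      fix l assume l: "l < length s'"
      then have l': "l < length s" using s' by simp
      have nth_s'l: "snd (s' ! l) = snd (s ! l)" using s' l' ij by (simp add: nth_list_update)
      have nth_t'l: "snd (t' ! f l) = snd (t ! f l)" using l' ij f(2) finj by (auto simp: t'_def nth_list_update)
      show "(snd (s' ! k) \<le> snd (s' ! l)) = (snd (t' ! f k) \<le> snd (t' ! f l))"
        using snds nth_s'l nth_t'l f(4) k' l' by simp
    qed
    ultimately show "\<exists>t'. step delta t t' \<and> subconf s' t'" by blast
  qed
qed

end
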